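(* Let $R$ be an associative ring with identity, and let $a,b,c,d\in R$ satisfy $bdb=bac$ and $dbd=acd$. If $ac\in R^{\dagger}$, then $bd\in R^{\dagger}$, $(bd)^{\dagger}=b\big((ac)^{\dagger}\big)^2d$, and $i(bd)\le i(ac)+1$.
   Context: For $x\in R$, $\mathrm{comm}(x)=\{y\in R : xy=yx\}$ and $\mathrm{comm}^2(x)=\{y\in R : yz=zy \text{ for all } z\in\mathrm{comm}(x)\}$. $R^{rad}$ is the Jacobson radical of $R$. An element $x$ has a p-Drazin (pseudo Drazin) inverse if there is $y\in R$ with $y=yxy$, $y\in\mathrm{comm}^2(x)$ and $x^k-x^{k+1}y\in R^{rad}$ for some $k\in\mathbb{N}$; such $y$ is unique and denoted $x^{\dagger}$; $R^{\dagger}$ is the set of such $x$. The smallest such $k$ is the p-Drazin index $i(x)$. *)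

theory Defs
  imports Main
begin

definition comm :: "'a::ring_1 \<Rightarrow> 'a set" where
  "comm x = {y. x * y = y * x}"

definition comm2 :: "'a::ring_1 \<Rightarrow> 'a set" where
  "comm2 x = {y. \<forall>z\<in>comm x. y * z = z * y}"

definition left_ideal :: "'a::ring_1 set \<Rightarrow> bool" where
  "left_ideal I \<longleftrightarrow> 0 \<in> I \<and> (\<forall>x\<in>I. \<forall>y\<in>I. x + y \<in> I) \<and> (\<forall>x\<in>I. - x \<in> I)
     \<and> (\<forall>r x. x \<in> I \<longrightarrow> r * x \<in> I)"

definition maximal_left_ideal :: "'a::ring_1 set \<Rightarrow> bool" where
  "maximal_left_ideal I \<longleftrightarrow> left_ideal I \<and> I \<noteq> UNIV \<and>
     (\<forall>J. left_ideal J \<and> I \<subseteq> J \<longrightarrow> J = I \<or> J = UNIV)"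

definition jrad :: "'a::ring_1 set" where
  "jrad = \<Inter> {I. maximal_left_ideal I}"

definition is_pdrazin_inv :: "'a::ring_1 \<Rightarrow> 'a \<Rightarrow> bool" where
  "is_pdrazin_inv x y \<longleftrightarrow> y = y * x * y \<and> y \<in> comm2 x \<and>
     (\<exists>k::nat. k \<ge> 1 \<and> x ^ k - x ^ (k + 1) * y \<in> jrad)"

definition pdrazin_set :: "'a::ring_1 set" where
  "pdrazin_set = {x. \<exists>y. is_pdrazin_inv x y}"

definition pdrazin :: "'a::ring_1 \<Rightarrow> 'a" where
  "pdrazin x = (THE y. is_pdrazin_inv x y)"

definition pdrazin_index :: "'a::ring_1 \<Rightarrow> nat" where
  "pdrazin_index x = (LEAST k. k \<ge> 1 \<and> x ^ k - x ^ (k + 1) * pdrazin x \<in> jrad)"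

end

theory Submission
  imports Defs
begin

lemma jrad_mem: "x \<in> jrad \<Longrightarrow> maximal_left_ideal M \<Longrightarrow> x \<in> M"
  unfolding jrad_def by blast

lemma jrad_intro: "(\<And>M. maximal_left_ideal M \<Longrightarrow> x \<in> M) \<Longrightarrow> x \<in> jrad"
  unfolding jrad_def by blast

lemma max_li: "maximal_left_ideal M \<Longrightarrow> left_ideal M"
  unfolding maximal_left_ideal_def by simp

lemma jrad_left: "x \<in> jrad \<Longrightarrow> (r::'a::ring_1) * x \<in> jrad"
  by (rule jrad_intro) (metis jrad_mem max_li left_ideal_def)

lemma jrad_add: "x \<in> jrad \<Longrightarrow> y \<in> jrad \<Longrightarrow> (x::'a::ring_1) + y \<in> jrad"
  by (rule jrad_intro) (metis jrad_mem max_li left_ideal_def)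

lemma jrad_neg: "x \<in> jrad \<Longrightarrow> - (x::'a::ring_1) \<in> jrad"
  by (rule jrad_intro) (metis jrad_mem max_li left_ideal_def)

lemma jrad_diff: "x \<in> jrad \<Longrightarrow> y \<in> jrad \<Longrightarrow> (x::'a::ring_1) - y \<in> jrad"
  using jrad_add[of x "-y"] jrad_neg[of y] by simp

lemma jrad_right:
  assumes x: "(x::'a::ring_1) \<in> jrad" shows "x * r \<in> jrad"
  unfolding jrad_def
proof
  fix M :: "'a set" assume "M \<in> {I. maximal_left_ideal I}"
  hence M: "maximal_left_ideal M" by simp
  hence LM: "left_ideal M" and MU: "M \<noteq> UNIV"
    and Mmax: "\<And>J. left_ideal J \<Longrightarrow> M \<subseteq> J \<Longrightarrow> J = M \<or> J = UNIV"
    unfolding maximal_left_ideal_def by auto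
  have M0: "0 \<in> M" and Madd: "\<And>u v. u \<in> M \<Longrightarrow> v \<in> M \<Longrightarrow> u + v \<in> M"
    and Mneg: "\<And>u. u \<in> M \<Longrightarrow> - u \<in> M" and Mmul: "\<And>q u. u \<in> M \<Longrightarrow> q * u \<in> M"
    using LM unfolding left_ideal_def by auto
  show "x * r \<in> M"
  proof (rule ccontr)
    assume nin: "x * r \<notin> M"
    have rM: "r \<notin> M" using nin Mmul by blast
    define M' where "M' = {v. v * r \<in> M}"
    have LM': "left_ideal M'"
      unfolding left_ideal_def M'_def
      using M0 Madd Mneg Mmul by (auto simp: distrib_right mult.assoc)
    have M'U: "M' \<noteq> UNIV" using rM unfolding M'_def by (metis UNIV_I mem_Collect_eq mult_1_left)
    have "maximal_left_ideal M'"
      unfolding maximal_left_ideal_def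
    proof (intro conjI LM' M'U allI impI)
      fix J assume J: "left_ideal J \<and> M' \<subseteq> J"
      have J0: "0 \<in> J" and Jadd: "\<And>u v. u \<in> J \<Longrightarrow> v \<in> J \<Longrightarrow> u + v \<in> J"
        and Jneg: "\<And>u. u \<in> J \<Longrightarrow> - u \<in> J" and Jmul: "\<And>q u. u \<in> J \<Longrightarrow> q * u \<in> J"
        using J unfolding left_ideal_def by auto
      show "J = M' \<or> J = UNIV"
      proof (cases "J = M'")
        case False
        then obtain u where uJ: "u \<in> J" and uM: "u * r \<notin> M" using J unfolding M'_def by auto
        define K where "K = {v. \<exists>q\<in>J. \<exists>m\<in>M. v = q * r + m}"
        have LK: "left_ideal K" unfolding left_ideal_def K_def
        proof (intro conjI ballI allI impI)
          show "0 \<in> {v. \<exists>q\<in>J. \<exists>m\<in>M. v = q * r + m}" using J0 M0 by force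
        next
          fix a b assume "a \<in> {v. \<exists>q\<in>J. \<exists>m\<in>M. v = q * r + m}" "b \<in> {v. \<exists>q\<in>J. \<exists>m\<in>M. v = q * r + m}"
          then obtain q1 m1 q2 m2 where "q1 \<in> J" "m1 \<in> M" "a = q1 * r + m1" "q2 \<in> J" "m2 \<in> M" "b = q2 * r + m2" by auto
          note h = this
          have "a + b = (q1 + q2) * r + (m1 + m2)" using h by (simp add: algebra_simps)
          moreover have "q1 + q2 \<in> J" "m1 + m2 \<in> M" using Jadd Madd h by auto
          ultimately show "a + b \<in> {v. \<exists>q\<in>J. \<exists>m\<in>M. v = q * r + m}" by blast
        next
          fix a assume "a \<in> {v. \<exists>q\<in>J. \<exists>m\<in>M. v = q * r + m}"
          then obtain q1 m1 where "q1 \<in> J" "m1 \<in> M" "a = q1 * r + m1" by auto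
          note h = this
          have "- a = (- q1) * r + (- m1)" using h by (simp add: algebra_simps)
          moreover have "- q1 \<in> J" "- m1 \<in> M" using Jneg Mneg h by auto
          ultimately show "- a \<in> {v. \<exists>q\<in>J. \<exists>m\<in>M. v = q * r + m}" by blast
        next
          fix t a assume "a \<in> {v. \<exists>q\<in>J. \<exists>m\<in>M. v = q * r + m}"
          then obtain q1 m1 where "q1 \<in> J" "m1 \<in> M" "a = q1 * r + m1" by auto
          note h = this
          have "t * a = (t * q1) * r + (t * m1)" using h by (simp add: algebra_simps)
          moreover have "t * q1 \<in> J" "t * m1 \<in> M" using Jmul Mmul h by auto
          ultimately show "t * a \<in> {v. \<exists>q\<in>J. \<exists>m\<in>M. v = q * r + m}" by blast
        qed
        have MK: "M \<subseteq> K" unfolding K_def using J0 by force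
        have "u * r \<in> K" unfolding K_def using uJ M0 by force
        hence "K \<noteq> M" using uM by auto
        hence KU: "K = UNIV" using Mmax[OF LK MK] by auto
        have "J = UNIV"
        proof (rule set_eqI, rule iffI)
          fix v :: 'a
          have "v * r \<in> K" using KU by simp
          then obtain q m where qJ: "q \<in> J" and mM: "m \<in> M" and e: "v * r = q * r + m"
            unfolding K_def by auto
          have "(v - q) * r = m" using e by (simp add: algebra_simps)
          hence "v - q \<in> M'" using mM unfolding M'_def by simp
          hence "v - q \<in> J" using J by auto
          hence "(v - q) + q \<in> J" using Jadd qJ by blast
          thus "v \<in> J" by simp
        qed simp
        thus ?thesis by simp
      qed simp
    qed
    hence "x \<in> M'" using x unfolding jrad_def by auto
    thus False using nin unfolding M'_def by simp
  qed
qed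

lemma jrad_left_inv:
  assumes j: "(j::'a::ring_1) \<in> jrad" shows "\<exists>s. s * (1 - j) = 1"
proof (rule ccontr)
  assume no: "\<not> (\<exists>s. s * (1 - j) = 1)"
  define L where "L = {v. \<exists>s. v = s * (1 - j)}"
  define A where "A = {I. left_ideal I \<and> L \<subseteq> I \<and> (1::'a) \<notin> I}"
  have LL: "left_ideal L" unfolding left_ideal_def
  proof (intro conjI ballI allI impI)
    show "0 \<in> L" unfolding L_def by (rule CollectI, rule exI[of _ 0], simp)
  next
    fix u v assume "u \<in> L" "v \<in> L"
    then obtain s1 s2 where "u = s1 * (1 - j)" "v = s2 * (1 - j)" unfolding L_def by blast
    thus "u + v \<in> L" unfolding L_def by (intro CollectI exI[of _ "s1 + s2"]) (simp add: distrib_right)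
  next
    fix u assume "u \<in> L"
    then obtain s1 where "u = s1 * (1 - j)" unfolding L_def by blast
    thus "- u \<in> L" unfolding L_def by (intro CollectI exI[of _ "- s1"]) simp
  next
    fix q u assume "u \<in> L"
    then obtain s1 where "u = s1 * (1 - j)" unfolding L_def by blast
    thus "q * u \<in> L" unfolding L_def by (intro CollectI exI[of _ "q * s1"]) (simp add: mult.assoc)
  qed
  have LA: "L \<in> A" unfolding A_def using LL no L_def by auto
  have "\<forall>C\<in>chains A. \<exists>U\<in>A. \<forall>X\<in>C. X \<subseteq> U"
  proof
    fix C assume C: "C \<in> chains A"
    show "\<exists>U\<in>A. \<forall>X\<in>C. X \<subseteq> U"
    proof (cases "C = {}")
      case True thus ?thesis using LA by auto
    next
      case False
      have CA: "C \<subseteq> A" and ch: "\<And>X Y. X \<in> C \<Longrightarrow> Y \<in> C \<Longrightarrow> X \<subseteq> Y \<or> Y \<subseteq> X"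
        using C unfolding chains_def chain_subset_def by auto
      have "\<Union>C \<in> A"
        unfolding A_def
      proof (intro CollectI conjI)
        show "left_ideal (\<Union>C)" unfolding left_ideal_def
        proof (intro conjI ballI allI impI)
          obtain X where X: "X \<in> C" using False by blast
          hence "left_ideal X" using CA unfolding A_def by auto
          hence "0 \<in> X" unfolding left_ideal_def by simp
          thus "0 \<in> \<Union>C" using X by blast
        next
          fix u v assume "u \<in> \<Union>C" "v \<in> \<Union>C"
          then obtain X Y where "X \<in> C" "Y \<in> C" "u \<in> X" "v \<in> Y" by auto
          note XY = this
          have LX: "left_ideal X" and LY: "left_ideal Y" using XY(1,2) CA unfolding A_def by auto
          show "u + v \<in> \<Union>C"
          proof (cases "X \<subseteq> Y")
            case True
            hence "u + v \<in> Y" using LY XY unfolding left_ideal_def by blast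
            thus ?thesis using XY by blast
          next
            case False
            hence "Y \<subseteq> X" using ch[OF XY(1,2)] by blast
            hence "u + v \<in> X" using LX XY unfolding left_ideal_def by blast
            thus ?thesis using XY by blast
          qed
        next
          fix u assume "u \<in> \<Union>C"
          then obtain X where X: "X \<in> C" "u \<in> X" by blast
          hence "left_ideal X" using CA unfolding A_def by auto
          thus "- u \<in> \<Union>C" using X unfolding left_ideal_def by blast
        next
          fix q u assume "u \<in> \<Union>C"
          then obtain X where X: "X \<in> C" "u \<in> X" by blast
          hence "left_ideal X" using CA unfolding A_def by auto
          thus "q * u \<in> \<Union>C" using X unfolding left_ideal_def by blast
        qed
        obtain X where X: "X \<in> C" using False by blast
        hence "L \<subseteq> X" using CA unfolding A_def by auto
        thus "L \<subseteq> \<Union>C" using X by blast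
        show "1 \<notin> \<Union>C" using CA unfolding A_def by blast
      qed
      thus ?thesis by blast
    qed
  qed
  from Zorn_Lemma2[OF this] obtain M where MA: "M \<in> A" and Mm: "\<forall>X\<in>A. M \<subseteq> X \<longrightarrow> X = M" by blast
  have "maximal_left_ideal M"
    unfolding maximal_left_ideal_def
  proof (intro conjI allI impI)
    show "left_ideal M" using MA A_def by auto
    show "M \<noteq> UNIV" using MA A_def by auto
    fix J assume J: "left_ideal J \<and> M \<subseteq> J"
    show "J = M \<or> J = UNIV"
    proof (cases "1 \<in> J")
      case True
      have "\<And>v. v * 1 \<in> J" using J True unfolding left_ideal_def by blast
      hence "J = UNIV" by auto
      thus ?thesis by simp
    next
      case False
      hence "J \<in> A" using J MA unfolding A_def by auto
      thus ?thesis using Mm J by auto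
    qed
  qed
  hence jM: "j \<in> M" using j unfolding jrad_def by auto
  have "1 - j \<in> L" unfolding L_def by (rule CollectI, rule exI[of _ 1], simp)
  hence "1 - j \<in> M" using MA unfolding A_def by auto
  hence "(1 - j) + j \<in> M" using jM MA unfolding A_def left_ideal_def by blast
  thus False using MA unfolding A_def by simp
qed

lemma comm2_comm: "y \<in> comm2 x \<Longrightarrow> z * x = x * z \<Longrightarrow> y * z = z * (y::'a::ring_1)"
  unfolding comm2_def comm_def by auto

lemma pow_pow_comm:
  assumes "y * x = x * (y::'a::ring_1)" shows "y ^ n * x ^ n = (y * x) ^ n"
proof (induction n)
  case (Suc n)
  have c: "y * (y * x) = (y * x) * y" using assms by (metis mult.assoc)
  have "y ^ Suc n * x ^ Suc n = y * (y ^ n * x ^ n) * x"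
    by (metis power_Suc power_Suc2 mult.assoc)
  also have "\<dots> = y * (y * x) ^ n * x" using Suc by simp
  also have "\<dots> = (y * x) ^ n * y * x" using power_commuting_commutes[OF c[symmetric], of n] by simp
  also have "\<dots> = (y * x) ^ Suc n" by (simp add: power_Suc2 mult.assoc del: power_Suc)
  finally show ?case .
qed simp

lemma idem_pow: "e * e = (e::'a::ring_1) \<Longrightarrow> n \<ge> 1 \<Longrightarrow> e ^ n = e"
proof (induction n)
  case (Suc n) thus ?case by (cases "n = 0") (auto simp: power_Suc2 simp del: power_Suc)
qed simp

lemma pd_basic:
  assumes "is_pdrazin_inv x (y::'a::ring_1)"
  shows "y * x = x * y" "y = y * x * y" "x * y * (x * y) = x * y"
    "\<exists>k\<ge>1. x ^ k * (1 - x * y) \<in> jrad" "y \<in> comm2 x"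
proof -
  show yx: "y * x = x * y" using assms comm2_comm[of y x x] unfolding is_pdrazin_inv_def by auto
  show yxy: "y = y * x * y" using assms unfolding is_pdrazin_inv_def by auto
  show "x * y * (x * y) = x * y" using yxy by (metis mult.assoc)
  obtain k where "k \<ge> 1" "x ^ k - x ^ (k+1) * y \<in> jrad" using assms unfolding is_pdrazin_inv_def by auto
  moreover have "x ^ k - x ^ (k+1) * y = x ^ k * (1 - x * y)"
    by (simp add: algebra_simps power_Suc2 del: power_Suc)
  ultimately show "\<exists>k\<ge>1. x ^ k * (1 - x * y) \<in> jrad" by auto
  show "y \<in> comm2 x" using assms unfolding is_pdrazin_inv_def by auto
qed

lemma pd_unique:
  assumes A: "is_pdrazin_inv x (y::'a::ring_1)" and B: "is_pdrazin_inv x y'"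
  shows "y = y'"
proof -
  note a = pd_basic[OF A] and b = pd_basic[OF B]
  define e where "e = x * y"
  define f where "f = x * y'"
  have ee: "e * e = e" using a(3) e_def by simp
  have ff: "f * f = f" using b(3) f_def by simp
  have yy': "y' * y = y * y'" using comm2_comm[OF b(5) a(1)] .
  have ef: "f * e = e * f"
  proof -
    have "e * f = x * (y * x) * y'" by (simp add: e_def f_def mult.assoc)
    also have "\<dots> = x * x * (y * y')" using a(1) by (simp add: mult.assoc)
    finally have 1: "e * f = x * x * (y * y')" .
    have "f * e = x * (y' * x) * y" by (simp add: e_def f_def mult.assoc)
    also have "\<dots> = x * x * (y' * y)" using b(1) by (simp add: mult.assoc)
    finally show ?thesis using 1 yy' by simp
  qed
  have pe: "\<And>n. n \<ge> 1 \<Longrightarrow> y ^ n * x ^ n = e"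
    using pow_pow_comm[OF a(1)] idem_pow[OF ee] a(1) e_def by simp
  have pf: "\<And>n. n \<ge> 1 \<Longrightarrow> y' ^ n * x ^ n = f"
    using pow_pow_comm[OF b(1)] idem_pow[OF ff] b(1) f_def by simp
  obtain k where k: "k \<ge> 1" "x ^ k * (1 - e) \<in> jrad" using a(4) e_def by auto
  obtain k' where k': "k' \<ge> 1" "x ^ k' * (1 - f) \<in> jrad" using b(4) f_def by auto
  have "y ^ k' * (x ^ k' * (1 - f)) \<in> jrad" using jrad_left k' by blast
  hence J1: "e * (1 - f) \<in> jrad" using pe[OF k'(1)] by (simp add: mult.assoc[symmetric])
  have "y' ^ k * (x ^ k * (1 - e)) \<in> jrad" using jrad_left k by blast
  hence J2: "f * (1 - e) \<in> jrad" using pf[OF k(1)] by (simp add: mult.assoc[symmetric])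
  define u where "u = e - f"
  have "u = e * (1 - f) - f * (1 - e)" unfolding u_def using ef by (simp add: algebra_simps)
  hence uJ: "u \<in> jrad" using jrad_diff J1 J2 by simp
  have ee': "\<And>z. e * (e * z) = e * z" using ee by (metis mult.assoc)
  have ff': "\<And>z. f * (f * z) = f * z" using ff by (metis mult.assoc)
  have ef': "\<And>z. f * (e * z) = e * (f * z)" using ef by (metis mult.assoc)
  have u3: "u * (u * u) = u" unfolding u_def
    by (simp add: algebra_simps ee ff ef ee' ff' ef')
  have "u * u \<in> jrad" using jrad_left uJ by blast
  then obtain s where s: "s * (1 - u * u) = 1" using jrad_left_inv by blast
  have "(1 - u * u) * u = 0" using u3 by (simp add: algebra_simps mult.assoc)
  hence "s * ((1 - u * u) * u) = 0" by simp
  hence "u = 0" using s by (simp add: mult.assoc[symmetric])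
  hence exy: "x * y = x * y'" using u_def e_def f_def by simp
  have "y = y * (x * y')" using a(2) exy by (simp add: mult.assoc)
  also have "\<dots> = (x * y') * y'" using a(1) exy by (simp add: mult.assoc[symmetric])
  also have "\<dots> = y'" using b(1) b(2) by (simp add: mult.assoc[symmetric])
  finally show ?thesis .
qed

lemma pdrazin_eq: "is_pdrazin_inv x y \<Longrightarrow> pdrazin x = y"
  unfolding pdrazin_def using pd_unique by blast

lemma core:
  fixes b d x y :: "'a::ring_1"
  assumes bx: "b * x = (b * d) * b" and xd: "x * d = d * (b * d)"
    and P: "is_pdrazin_inv x y"
  shows "is_pdrazin_inv (b * d) (b * y^2 * d)"
    and "\<And>k. x ^ k - x ^ (k + 1) * y \<in> jrad \<Longrightarrow>
           (b * d) ^ (k + 1) - (b * d) ^ (k + 1 + 1) * (b * y^2 * d) \<in> jrad"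
proof -
  note a = pd_basic[OF P]
  define s where "s = b * d"
  define z where "z = b * y^2 * d"
  have bx': "\<And>t. b * (x * t) = s * (b * t)" using bx s_def by (metis mult.assoc)
  have xd': "\<And>t. x * (d * t) = d * (s * t)" using xd s_def by (metis mult.assoc)
  have yx': "\<And>t. y * (x * t) = x * (y * t)" using a(1) by (metis mult.assoc)
  have yxy: "\<And>t. y * (x * (y * t)) = y * t" using a(2) by (metis mult.assoc)
  have xyy: "\<And>t. x * (y * (y * t)) = y * t" using yx' yxy by metis
  have yyx: "\<And>t. y * (y * (x * t)) = y * t" using yx' yxy by metis
  have sdef': "\<And>t. b * (d * t) = s * t" using s_def by (simp add: mult.assoc)
  have comm_y: "\<And>w. w * x = x * w \<Longrightarrow> y * w = w * y" using comm2_comm[OF a(5)] by blast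
  have dbx: "(d * b) * x = x * (d * b)"
  proof -
    have "(d * b) * x = d * (s * b)" using bx' s_def by (metis mult.assoc mult_1_right)
    also have "\<dots> = x * (d * b)" using xd' s_def by (metis mult.assoc)
    finally show ?thesis .
  qed
  have ydb: "\<And>t. y * (d * (b * t)) = d * (b * (y * t))"
    using comm_y[OF dbx] by (metis mult.assoc)
  have zsz: "z * s * z = z"
  proof -
    have "z * s * z = b * (y * (y * (d * (b * (d * (b * (y * (y * d))))))))"
      by (simp add: z_def s_def power2_eq_square mult.assoc)
    also have "\<dots> = b * (y * (y * (x * (d * (b * (y * (y * d)))))))"
      using xd' s_def by (simp add: mult.assoc)
    also have "\<dots> = b * (y * (d * (b * (y * (y * d)))))" by (simp add: yyx)
    also have "\<dots> = b * (y * (y * (y * (d * (b * d)))))" by (simp add: ydb)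
    also have "\<dots> = b * (y * (y * (y * (x * d))))" using xd s_def by (simp add: mult.assoc)
    also have "\<dots> = b * (y * (y * d))" by (simp add: yyx)
    also have "\<dots> = z" by (simp add: z_def power2_eq_square mult.assoc)
    finally show ?thesis .
  qed
  have zc: "z \<in> comm2 s"
    unfolding comm2_def comm_def
  proof (intro CollectI ballI)
    fix w assume "w \<in> {v. s * v = v * s}"
    hence sw: "s * w = w * s" by simp
    have sw': "\<And>t. s * (w * t) = w * (s * t)" using sw by (metis mult.assoc)
    have dwbx: "(d * w * b) * x = x * (d * w * b)"
    proof -
      have "(d * w * b) * x = d * (w * (s * b))" using bx by (simp add: s_def mult.assoc)
      also have "\<dots> = d * (s * (w * b))" using sw' by simp
      also have "\<dots> = x * (d * w * b)" using xd' by (simp add: mult.assoc)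
      finally show ?thesis .
    qed
    have ydwb: "\<And>t. y * (d * (w * (b * t))) = d * (w * (b * (y * t)))"
      using comm_y[OF dwbx] by (metis mult.assoc)
    have "z * w = b * (y * (y * (d * w)))" by (simp add: z_def power2_eq_square mult.assoc)
    also have "\<dots> = b * (y * (y * (y * (x * (d * w)))))" by (simp add: yyx)
    also have "\<dots> = b * (y * (y * (y * (d * (s * w)))))" by (simp add: xd')
    also have "\<dots> = b * (y * (y * (y * (d * (w * s)))))" by (simp add: sw)
    also have "\<dots> = b * (d * (w * (b * (y * (y * (y * d))))))" by (simp add: ydwb s_def mult.assoc)
    also have "\<dots> = s * (w * (b * (y * (y * (y * d)))))" by (simp add: sdef')
    also have "\<dots> = w * (s * (b * (y * (y * (y * d)))))" by (simp add: sw')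
    also have "\<dots> = w * (b * (x * (y * (y * (y * d)))))" by (simp add: bx')
    also have "\<dots> = w * (b * (y * (y * d)))" by (simp add: xyy)
    also have "\<dots> = w * z" by (simp add: z_def power2_eq_square mult.assoc)
    finally show "z * w = w * z" .
  qed
  have spow: "\<And>n. s ^ n * b = b * x ^ n"
  proof -
    fix n show "s ^ n * b = b * x ^ n"
    proof (induction n)
      case (Suc n)
      have "s ^ Suc n * b = s ^ n * (s * b)" by (metis power_Suc2 mult.assoc)
      also have "\<dots> = s ^ n * (b * x)" using bx s_def by simp
      also have "\<dots> = b * x ^ n * x" using Suc by (metis mult.assoc)
      also have "\<dots> = b * x ^ Suc n" by (metis power_Suc2 mult.assoc)
      finally show ?case .
    qed simp
  qed
  have rad: "\<And>k. x ^ k - x ^ (k + 1) * y \<in> jrad \<Longrightarrow>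
           s ^ (k + 1) - s ^ (k + 1 + 1) * z \<in> jrad"
  proof -
    fix k assume k: "x ^ k - x ^ (k + 1) * y \<in> jrad"
    have e1: "s ^ (k + 1) = b * x ^ k * d"
      using spow[of k] by (metis power_Suc2 Suc_eq_plus1 s_def mult.assoc)
    have "s ^ (k + 1 + 1) * z = (s ^ (k + 1 + 1) * b) * (y * (y * d))"
      by (simp add: z_def power2_eq_square mult.assoc)
    also have "\<dots> = b * (x ^ (k + 1) * (x * (y * (y * d))))"
      using spow[of "k+1+1"] by (simp add: power_Suc2 mult.assoc del: power_Suc)
    also have "\<dots> = b * (x ^ (k + 1) * (y * d))" by (simp add: xyy)
    finally have e2: "s ^ (k + 1 + 1) * z = b * (x ^ (k + 1) * (y * d))" .
    have "b * (x ^ k - x ^ (k + 1) * y) * d \<in> jrad"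
      using jrad_left jrad_right k by blast
    moreover have "s ^ (k + 1) - s ^ (k + 1 + 1) * z = b * (x ^ k - x ^ (k + 1) * y) * d"
      using e1 e2 by (simp add: algebra_simps)
    ultimately show "s ^ (k + 1) - s ^ (k + 1 + 1) * z \<in> jrad" by simp
  qed
  obtain k where "k \<ge> 1" "x ^ k - x ^ (k + 1) * y \<in> jrad" using P unfolding is_pdrazin_inv_def by auto
  hence "s ^ (k + 1) - s ^ (k + 1 + 1) * z \<in> jrad" using rad by blast
  hence "is_pdrazin_inv s z" unfolding is_pdrazin_inv_def using zsz zc by (metis le_add2)
  thus "is_pdrazin_inv (b * d) (b * y^2 * d)" using s_def z_def by simp
  show "\<And>k. x ^ k - x ^ (k + 1) * y \<in> jrad \<Longrightarrow>
           (b * d) ^ (k + 1) - (b * d) ^ (k + 1 + 1) * (b * y^2 * d) \<in> jrad"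
    using rad s_def z_def by simp
qed


theorem theorem3p2:
  fixes a b c d :: "'a::ring_1"
  assumes "b * d * b = b * a * c" and "d * b * d = a * c * d"
    and "a * c \<in> pdrazin_set"
  shows "b * d \<in> pdrazin_set \<and>
    pdrazin (b * d) = b * (pdrazin (a * c))^2 * d \<and>
    pdrazin_index (b * d) \<le> pdrazin_index (a * c) + 1"
proof -
  obtain y where P: "is_pdrazin_inv (a * c) y" using assms(3) unfolding pdrazin_set_def by auto
  have py: "pdrazin (a * c) = y" using pdrazin_eq[OF P] .
  have bx: "b * (a * c) = (b * d) * b" using assms(1) by (simp add: mult.assoc)
  have xd: "(a * c) * d = d * (b * d)" using assms(2) by (simp add: mult.assoc)
  note C = core[OF bx xd P]
  have pz: "pdrazin (b * d) = b * y^2 * d" using pdrazin_eq[OF C(1)] .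
  have mem: "b * d \<in> pdrazin_set" using C(1) unfolding pdrazin_set_def by auto
  define i where "i = pdrazin_index (a * c)"
  have "\<exists>k. k \<ge> 1 \<and> (a * c) ^ k - (a * c) ^ (k + 1) * pdrazin (a * c) \<in> jrad"
    using P py unfolding is_pdrazin_inv_def by auto
  from LeastI_ex[OF this] have "i \<ge> 1 \<and> (a * c) ^ i - (a * c) ^ (i + 1) * y \<in> jrad"
    unfolding i_def pdrazin_index_def py .
  hence "i + 1 \<ge> 1 \<and> (b * d) ^ (i + 1) - (b * d) ^ (i + 1 + 1) * pdrazin (b * d) \<in> jrad"
    using C(2) pz by simp
  hence "pdrazin_index (b * d) \<le> i + 1" unfolding pdrazin_index_def by (rule Least_le)
  thus ?thesis using mem pz py i_def by simp
qed

end
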